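(* Let $G$ be a finite group of order $n$, $k$ a positive integer, $a_1,\dots,a_k,b_1,\dots,b_k$ independent uniformly random elements of $G$, and for $(i,j)\in V=[k]\times[k]$ and $x\in G$ let $I_{(i,j)}(x)$ be the indicator of the event $\{x=a_ib_j \text{ or } x=b_ja_i\}$. Let $\Gamma=(V,E)$ be the graph with $(i,j)\sim(\ell,m)$ iff ($i=\ell$ and $j\ne m$) or ($i\ne \ell$ and $j=m$). Let $x,y\in G$, $v\in V$ and $u\in V$ with $u\sim v$. Then $$\mathbb{E}[I_v(x)I_u(y)]=\frac{4}{n^2}\Big(1-\frac{|C(x)|+|C(y)|}{2n}+\frac{|C(x)\cap C(y)|}{4n}\Big).$$
   Context: $[k]=\{1,\dots,k\}$; $C(x)=\{g\in G: gx=xg\}$ is the centralizer of $x$. *)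

theory Defs
  imports "HOL-Algebra.Group" "HOL-Probability.Probability"
begin

definition centralizer_of :: "('a, 'b) monoid_scheme \<Rightarrow> 'a \<Rightarrow> 'a set" where
  "centralizer_of G x = {g \<in> carrier G. g \<otimes>\<^bsub>G\<^esub> x = x \<otimes>\<^bsub>G\<^esub> g}"

definition ind_I :: "('a, 'b) monoid_scheme \<Rightarrow> nat \<times> nat \<Rightarrow> 'a \<Rightarrow> (nat \<Rightarrow> 'a) \<times> (nat \<Rightarrow> 'a) \<Rightarrow> real" where
  "ind_I G v x ab = (if x = fst ab (fst v) \<otimes>\<^bsub>G\<^esub> snd ab (snd v) \<or> x = snd ab (snd v) \<otimes>\<^bsub>G\<^esub> fst ab (fst v)
                      then 1 else 0)"

definition verts :: "nat \<Rightarrow> (nat \<times> nat) set" where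
  "verts k = {1..k} \<times> {1..k}"

definition gamma_adj :: "nat \<times> nat \<Rightarrow> nat \<times> nat \<Rightarrow> bool" where
  "gamma_adj u v \<longleftrightarrow> (fst u = fst v \<and> snd u \<noteq> snd v) \<or> (fst u \<noteq> fst v \<and> snd u = snd v)"

definition rand_ab :: "('a, 'b) monoid_scheme \<Rightarrow> nat \<Rightarrow> ((nat \<Rightarrow> 'a) \<times> (nat \<Rightarrow> 'a)) pmf" where
  "rand_ab G k = pmf_of_set ((PiE {1..k} (\<lambda>_. carrier G)) \<times> (PiE {1..k} (\<lambda>_. carrier G)))"

end

theory Submission
  imports Defs
begin

lemma pmf_of_set_times:
  assumes "finite A" "A \<noteq> {}" "finite B" "B \<noteq> {}"
  shows "pmf_of_set (A \<times> B) = pair_pmf (pmf_of_set A) (pmf_of_set B)"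
proof (rule pmf_eqI)
  fix z :: "'a \<times> 'b"
  obtain a b where z: "z = (a,b)" by (cases z)
  show "pmf (pmf_of_set (A \<times> B)) z = pmf (pair_pmf (pmf_of_set A) (pmf_of_set B)) z"
    using assms unfolding z by (simp add: pmf_pair card_cartesian_product indicator_def)
qed

lemma PiE_Pi_pmf:
  assumes "finite I" "finite A" "A \<noteq> {}"
  shows "pmf_of_set (PiE I (\<lambda>_. A)) = Pi_pmf I undefined (\<lambda>_. pmf_of_set A)"
proof -
  have "PiE_dflt I undefined (\<lambda>_. A) = PiE I (\<lambda>_. A)"
    by (auto simp: PiE_dflt_def PiE_def extensional_def)
  then show ?thesis using Pi_pmf_of_set[of I "\<lambda>_. A" undefined] assms by simp
qed

lemma Pi_pmf_two:
  assumes "finite I" "j \<in> I" "m \<in> I" "j \<noteq> m"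
  shows "map_pmf (\<lambda>f. (f j, f m)) (Pi_pmf I d p) = pair_pmf (p j) (p m)"
proof -
  have I: "I = insert j (I - {j})" using assms by auto
  have "map_pmf (\<lambda>f. (f j, f m)) (Pi_pmf I d p)
      = map_pmf (\<lambda>f. (f j, f m)) (map_pmf (\<lambda>(y,f). f(j:=y)) (pair_pmf (p j) (Pi_pmf (I - {j}) d p)))"
    by (subst I, subst Pi_pmf_insert) (use assms in auto)
  also have "\<dots> = map_pmf (\<lambda>(y,f). (id y, f m)) (pair_pmf (p j) (Pi_pmf (I - {j}) d p))"
    using assms by (simp add: pmf.map_comp o_def case_prod_unfold)
  also have "\<dots> = pair_pmf (p j) (p m)"
    by (subst map_pair) (use assms in \<open>simp add: Pi_pmf_component\<close>)
  finally show ?thesis .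
qed

lemma card_solve:
  fixes G (structure)
  assumes "group G" "c \<in> carrier G" "x \<in> carrier G"
  shows "card {d \<in> carrier G. x = c \<otimes>\<^bsub>G\<^esub> d \<or> x = d \<otimes>\<^bsub>G\<^esub> c}
       = (if c \<otimes>\<^bsub>G\<^esub> x = x \<otimes>\<^bsub>G\<^esub> c then 1 else 2)"
proof -
  interpret group G by fact
  have S: "{d \<in> carrier G. x = c \<otimes> d \<or> x = d \<otimes> c} = {inv c \<otimes> x, x \<otimes> inv c}"
  proof (intro Set.set_eqI iffI)
    fix d assume "d \<in> {d \<in> carrier G. x = c \<otimes> d \<or> x = d \<otimes> c}"
    then have d: "d \<in> carrier G" "x = c \<otimes> d \<or> x = d \<otimes> c" by auto
    show "d \<in> {inv c \<otimes> x, x \<otimes> inv c}"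
    proof (cases "x = c \<otimes> d")
      case True
      then have "d = inv c \<otimes> x" using assms d by (simp add: m_assoc[symmetric])
      then show ?thesis by simp
    next
      case False
      then have "x = d \<otimes> c" using d by simp
      then have "d = x \<otimes> inv c" using assms d by (simp add: m_assoc)
      then show ?thesis by simp
    qed
  next
    fix d assume "d \<in> {inv c \<otimes> x, x \<otimes> inv c}"
    moreover have "x = c \<otimes> (inv c \<otimes> x)" using assms by (simp add: m_assoc[symmetric])
    moreover have "x = x \<otimes> inv c \<otimes> c" using assms by (simp add: m_assoc)
    ultimately show "d \<in> {d \<in> carrier G. x = c \<otimes> d \<or> x = d \<otimes> c}" using assms by auto
  qed
  have "(inv c \<otimes> x = x \<otimes> inv c) \<longleftrightarrow> (c \<otimes> x = x \<otimes> c)"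
  proof
    assume h: "inv c \<otimes> x = x \<otimes> inv c"
    have "c \<otimes> x = c \<otimes> (x \<otimes> inv c) \<otimes> c" using assms by (simp add: m_assoc)
    also have "\<dots> = c \<otimes> (inv c \<otimes> x) \<otimes> c" using h by simp
    also have "\<dots> = x \<otimes> c" using assms by (simp add: m_assoc[symmetric])
    finally show "c \<otimes> x = x \<otimes> c" .
  next
    assume h: "c \<otimes> x = x \<otimes> c"
    have "inv c \<otimes> x = inv c \<otimes> (x \<otimes> c) \<otimes> inv c" using assms by (simp add: m_assoc)
    also have "\<dots> = inv c \<otimes> (c \<otimes> x) \<otimes> inv c" using h by simp
    also have "\<dots> = x \<otimes> inv c" using assms by (simp add: m_assoc[symmetric])
    finally show "inv c \<otimes> x = x \<otimes> inv c" .
  qed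
  then show ?thesis unfolding S by auto
qed

definition gcnt :: "('a, 'b) monoid_scheme \<Rightarrow> 'a \<Rightarrow> 'a \<Rightarrow> real" where
  "gcnt G z c = (if c \<otimes>\<^bsub>G\<^esub> z = z \<otimes>\<^bsub>G\<^esub> c then 1 else 2)"

lemma sum_ind:
  assumes "group G" "finite (carrier G)" "c \<in> carrier G" "z \<in> carrier G"
  shows "(\<Sum>d\<in>carrier G. (if z = c \<otimes>\<^bsub>G\<^esub> d \<or> z = d \<otimes>\<^bsub>G\<^esub> c then 1 else 0 :: real)) = gcnt G z c"
proof -
  have "(\<Sum>d\<in>carrier G. (if z = c \<otimes>\<^bsub>G\<^esub> d \<or> z = d \<otimes>\<^bsub>G\<^esub> c then 1 else 0 :: real))
      = (\<Sum>d\<in>carrier G. of_bool (z = c \<otimes>\<^bsub>G\<^esub> d \<or> z = d \<otimes>\<^bsub>G\<^esub> c))"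
    by (rule sum.cong) auto
  also have "\<dots> = real (card (carrier G \<inter> {d. z = c \<otimes>\<^bsub>G\<^esub> d \<or> z = d \<otimes>\<^bsub>G\<^esub> c}))"
    by (rule sum_of_bool_eq[OF assms(2) assms(2)])
  also have "carrier G \<inter> {d. z = c \<otimes>\<^bsub>G\<^esub> d \<or> z = d \<otimes>\<^bsub>G\<^esub> c} = {d \<in> carrier G. z = c \<otimes>\<^bsub>G\<^esub> d \<or> z = d \<otimes>\<^bsub>G\<^esub> c}"
    by blast
  also have "real (card \<dots>) = gcnt G z c" using card_solve[OF assms(1,3,4)] by (simp add: gcnt_def)
  finally show ?thesis .
qed

lemma sum_gcnt:
  assumes "group G" "finite (carrier G)" "x \<in> carrier G" "y \<in> carrier G"
  shows "(\<Sum>c\<in>carrier G. gcnt G x c * gcnt G y c) =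
     4 * real (card (carrier G)) - 2 * real (card (centralizer_of G x)) - 2 * real (card (centralizer_of G y))
     + real (card (centralizer_of G x \<inter> centralizer_of G y))"
proof -
  let ?C = "carrier G"
  have cx: "\<And>c. c \<in> ?C \<Longrightarrow> c \<in> centralizer_of G x \<longleftrightarrow> c \<otimes>\<^bsub>G\<^esub> x = x \<otimes>\<^bsub>G\<^esub> c"
    and cy: "\<And>c. c \<in> ?C \<Longrightarrow> c \<in> centralizer_of G y \<longleftrightarrow> c \<otimes>\<^bsub>G\<^esub> y = y \<otimes>\<^bsub>G\<^esub> c"
    by (auto simp: centralizer_of_def)
  have sub: "centralizer_of G x \<subseteq> ?C" "centralizer_of G y \<subseteq> ?C" by (auto simp: centralizer_of_def)
  have cardI: "\<And>A. A \<subseteq> ?C \<Longrightarrow> (\<Sum>c\<in>?C. of_bool (c \<in> A) :: real) = real (card A)"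
  proof -
    fix A assume "A \<subseteq> ?C"
    then have e: "?C \<inter> {c. c \<in> A} = A" by auto
    have "(\<Sum>c\<in>?C. of_bool (c \<in> A) :: real) = real (card (?C \<inter> {c. c \<in> A}))"
      using assms(2) by simp
    then show "(\<Sum>c\<in>?C. of_bool (c \<in> A) :: real) = real (card A)" unfolding e .
  qed
  have "(\<Sum>c\<in>?C. gcnt G x c * gcnt G y c) = (\<Sum>c\<in>?C. 4 - 2 * of_bool (c \<in> centralizer_of G x)
      - 2 * of_bool (c \<in> centralizer_of G y) + of_bool (c \<in> centralizer_of G x \<inter> centralizer_of G y))"
    by (rule sum.cong) (auto simp: gcnt_def cx cy)
  also have "\<dots> = 4 * real (card ?C) - 2 * (\<Sum>c\<in>?C. of_bool (c \<in> centralizer_of G x))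
      - 2 * (\<Sum>c\<in>?C. of_bool (c \<in> centralizer_of G y)) + (\<Sum>c\<in>?C. of_bool (c \<in> centralizer_of G x \<inter> centralizer_of G y))"
    by (simp add: sum.distrib sum_subtractf sum_distrib_left)
  also have "\<dots> = 4 * real (card ?C) - 2 * real (card (centralizer_of G x)) - 2 * real (card (centralizer_of G y))
     + real (card (centralizer_of G x \<inter> centralizer_of G y))"
    using sub by (simp only: cardI le_infI1)
  finally show ?thesis .
qed

theorem proposition4p6:
  fixes G :: "('a, 'b) monoid_scheme" and k :: nat and x y :: 'a and u v :: "nat \<times> nat"
  assumes "group G" and "finite (carrier G)" and "k \<ge> 1"
    and "x \<in> carrier G" and "y \<in> carrier G"
    and "v \<in> verts k" and "u \<in> verts k" and "gamma_adj u v"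
  shows "measure_pmf.expectation (rand_ab G k) (\<lambda>ab. ind_I G v x ab * ind_I G u y ab)
     = 4 / (real (card (carrier G)))^2 *
       (1 - (real (card (centralizer_of G x)) + real (card (centralizer_of G y))) / (2 * real (card (carrier G)))
          + real (card (centralizer_of G x \<inter> centralizer_of G y)) / (4 * real (card (carrier G))))"
proof -
  define C where "C = carrier G"
  define n where "n = card C"
  define U where "U = pmf_of_set C"
  define S where "S = PiE {1..k} (\<lambda>_. C)"
  have finC: "finite C" using assms(2) by (simp add: C_def)
  have Cne: "C \<noteq> {}" using group.is_monoid[OF assms(1)] monoid.one_closed unfolding C_def by blast
  have npos: "real n > 0" using finC Cne by (simp add: n_def card_gt_0_iff)
  have finS: "finite S" unfolding S_def using finC by (simp add: finite_PiE)
  have Sne: "S \<noteq> {}" unfolding S_def using Cne by (simp add: PiE_eq_empty_iff)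
  have PS: "pmf_of_set S = Pi_pmf {1..k} undefined (\<lambda>_. U)"
    unfolding S_def U_def by (rule PiE_Pi_pmf) (use finC Cne in auto)
  have R: "rand_ab G k = pair_pmf (pmf_of_set S) (pmf_of_set S)"
    unfolding rand_ab_def S_def[symmetric] C_def[symmetric] by (rule pmf_of_set_times) (use finS Sne in auto)
  have comp: "\<And>i. i \<in> {1..k} \<Longrightarrow> map_pmf (\<lambda>f. f i) (pmf_of_set S) = U"
    unfolding PS by (subst Pi_pmf_component) auto
  have two: "\<And>j m. j \<in> {1..k} \<Longrightarrow> m \<in> {1..k} \<Longrightarrow> j \<noteq> m \<Longrightarrow>
      map_pmf (\<lambda>f. (f j, f m)) (pmf_of_set S) = pair_pmf U U"
    unfolding PS by (rule Pi_pmf_two) auto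
  have UU: "pair_pmf U U = pmf_of_set (C \<times> C)"
    unfolding U_def by (rule pmf_of_set_times[symmetric]) (use finC Cne in auto)
  have sg: "(\<Sum>c\<in>C. gcnt G x c * gcnt G y c) =
     4 * real n - 2 * real (card (centralizer_of G x)) - 2 * real (card (centralizer_of G y))
     + real (card (centralizer_of G x \<inter> centralizer_of G y))"
    unfolding C_def n_def by (rule sum_gcnt) (use assms in auto)
  have si: "\<And>c z. c \<in> C \<Longrightarrow> z \<in> C \<Longrightarrow>
     (\<Sum>d\<in>C. (if z = c \<otimes>\<^bsub>G\<^esub> d \<or> z = d \<otimes>\<^bsub>G\<^esub> c then 1 else 0 :: real)) = gcnt G z c"
    unfolding C_def by (rule sum_ind) (use assms in auto)
  have si': "\<And>c z. c \<in> C \<Longrightarrow> z \<in> C \<Longrightarrow>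
     (\<Sum>d\<in>C. (if z = d \<otimes>\<^bsub>G\<^esub> c \<or> z = c \<otimes>\<^bsub>G\<^esub> d then 1 else 0 :: real)) = gcnt G z c"
  proof -
    fix c z assume "c \<in> C" "z \<in> C"
    have "(\<Sum>d\<in>C. (if z = d \<otimes>\<^bsub>G\<^esub> c \<or> z = c \<otimes>\<^bsub>G\<^esub> d then 1 else 0 :: real))
        = (\<Sum>d\<in>C. (if z = c \<otimes>\<^bsub>G\<^esub> d \<or> z = d \<otimes>\<^bsub>G\<^esub> c then 1 else 0 :: real))"
      by (rule sum.cong) auto
    then show "(\<Sum>d\<in>C. (if z = d \<otimes>\<^bsub>G\<^esub> c \<or> z = c \<otimes>\<^bsub>G\<^esub> d then 1 else 0 :: real)) = gcnt G z c"
      using si[OF \<open>c \<in> C\<close> \<open>z \<in> C\<close>] by simp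
  qed
  have xC: "x \<in> C" "y \<in> C" using assms unfolding C_def by auto
  obtain i m where v: "v = (i, m)" by (cases v)
  obtain l j where u: "u = (l, j)" by (cases u)
  have idx: "i \<in> {1..k}" "m \<in> {1..k}" "l \<in> {1..k}" "j \<in> {1..k}"
    using assms(6,7) unfolding v u verts_def by auto
  have main: "measure_pmf.expectation (rand_ab G k) (\<lambda>ab. ind_I G v x ab * ind_I G u y ab)
      = (4 * real n - 2 * real (card (centralizer_of G x)) - 2 * real (card (centralizer_of G y))
         + real (card (centralizer_of G x \<inter> centralizer_of G y))) / (real n * (real n * real n))"
  proof (cases "l = i")
    case True
    then have jm: "j \<noteq> m" using assms(8) unfolding u v gamma_adj_def by auto
    define H :: "'a \<times> 'a \<times> 'a \<Rightarrow> real" where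
      "H = (\<lambda>(c,d,e). (if x = c \<otimes>\<^bsub>G\<^esub> d \<or> x = d \<otimes>\<^bsub>G\<^esub> c then 1 else 0)
                    * (if y = c \<otimes>\<^bsub>G\<^esub> e \<or> y = e \<otimes>\<^bsub>G\<^esub> c then 1 else 0))"
    define \<phi> where "\<phi> = (\<lambda>(a :: nat \<Rightarrow> 'a, b :: nat \<Rightarrow> 'a). ((\<lambda>f. f i) a, (\<lambda>f. (f m, f j)) b))"
    have Fe: "(\<lambda>ab. ind_I G v x ab * ind_I G u y ab) = (\<lambda>ab. H (\<phi> ab))"
      unfolding H_def \<phi>_def ind_I_def u v True by (auto simp: fun_eq_iff)
    have M: "map_pmf \<phi> (rand_ab G k) = pmf_of_set (C \<times> (C \<times> C))"
    proof -
      have "map_pmf \<phi> (rand_ab G k) = pair_pmf U (pair_pmf U U)"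
        unfolding R \<phi>_def map_pair comp[OF idx(1)] two[OF idx(2,4) jm[symmetric]] ..
      also have "\<dots> = pmf_of_set (C \<times> (C \<times> C))"
        unfolding UU unfolding U_def by (rule pmf_of_set_times[symmetric]) (use finC Cne in auto)
      finally show ?thesis .
    qed
    have "measure_pmf.expectation (rand_ab G k) (\<lambda>ab. ind_I G v x ab * ind_I G u y ab)
        = measure_pmf.expectation (map_pmf \<phi> (rand_ab G k)) H"
      unfolding Fe by simp
    also have "\<dots> = sum H (C \<times> (C \<times> C)) / real (card (C \<times> (C \<times> C)))"
      unfolding M by (rule integral_pmf_of_set) (use finC Cne in auto)
    also have "sum H (C \<times> (C \<times> C)) = (\<Sum>c\<in>C. \<Sum>d\<in>C. \<Sum>e\<in>C. H (c, d, e))"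
      by (simp add: sum.cartesian_product)
    also have "\<dots> = (\<Sum>c\<in>C. gcnt G x c * gcnt G y c)"
    proof (rule sum.cong[OF refl])
      fix c assume c: "c \<in> C"
      have "(\<Sum>d\<in>C. \<Sum>e\<in>C. H (c, d, e)) =
          (\<Sum>d\<in>C. (if x = c \<otimes>\<^bsub>G\<^esub> d \<or> x = d \<otimes>\<^bsub>G\<^esub> c then 1 else 0 :: real)) *
          (\<Sum>e\<in>C. (if y = c \<otimes>\<^bsub>G\<^esub> e \<or> y = e \<otimes>\<^bsub>G\<^esub> c then 1 else 0 :: real))"
        unfolding H_def by (simp add: sum_product)
      then show "(\<Sum>d\<in>C. \<Sum>e\<in>C. H (c, d, e)) = gcnt G x c * gcnt G y c"
        using si[OF c xC(1)] si[OF c xC(2)] by simp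
    qed
    finally show ?thesis using sg by (simp add: card_cartesian_product n_def)
  next
    case False
    then have jm: "j = m" using assms(8) unfolding u v gamma_adj_def by auto
    define H :: "('a \<times> 'a) \<times> 'a \<Rightarrow> real" where
      "H = (\<lambda>((c,c'),d). (if x = c \<otimes>\<^bsub>G\<^esub> d \<or> x = d \<otimes>\<^bsub>G\<^esub> c then 1 else 0)
                    * (if y = c' \<otimes>\<^bsub>G\<^esub> d \<or> y = d \<otimes>\<^bsub>G\<^esub> c' then 1 else 0))"
    define \<phi> where "\<phi> = (\<lambda>(a :: nat \<Rightarrow> 'a, b :: nat \<Rightarrow> 'a). ((\<lambda>f. (f i, f l)) a, (\<lambda>f. f m) b))"
    have Fe: "(\<lambda>ab. ind_I G v x ab * ind_I G u y ab) = (\<lambda>ab. H (\<phi> ab))"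
      unfolding H_def \<phi>_def ind_I_def u v jm by (auto simp: fun_eq_iff)
    have M: "map_pmf \<phi> (rand_ab G k) = pmf_of_set ((C \<times> C) \<times> C)"
    proof -
      have "map_pmf \<phi> (rand_ab G k) = pair_pmf (pair_pmf U U) U"
        unfolding R \<phi>_def map_pair comp[OF idx(2)] two[OF idx(1,3) not_sym[OF False]] ..
      also have "\<dots> = pmf_of_set ((C \<times> C) \<times> C)"
        unfolding UU unfolding U_def by (rule pmf_of_set_times[symmetric]) (use finC Cne in auto)
      finally show ?thesis .
    qed
    have "measure_pmf.expectation (rand_ab G k) (\<lambda>ab. ind_I G v x ab * ind_I G u y ab)
        = measure_pmf.expectation (map_pmf \<phi> (rand_ab G k)) H"
      unfolding Fe by simp
    also have "\<dots> = sum H ((C \<times> C) \<times> C) / real (card ((C \<times> C) \<times> C))"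
      unfolding M by (rule integral_pmf_of_set) (use finC Cne in auto)
    also have "sum H ((C \<times> C) \<times> C) = (\<Sum>p\<in>C \<times> C. \<Sum>d\<in>C. H (p, d))"
      by (simp only: sum.cartesian_product case_prod_eta)
    also have "\<dots> = (\<Sum>c\<in>C. \<Sum>c'\<in>C. \<Sum>d\<in>C. H ((c, c'), d))"
    proof -
      have "(\<Sum>c\<in>C. \<Sum>c'\<in>C. \<Sum>d\<in>C. H ((c, c'), d)) = (\<Sum>p\<in>C \<times> C. \<Sum>d\<in>C. H (p, d))"
        by (subst sum.cartesian_product) (rule sum.cong, auto)
      then show ?thesis by simp
    qed
    also have "\<dots> = (\<Sum>d\<in>C. \<Sum>c\<in>C. \<Sum>c'\<in>C. H ((c, c'), d))"
      by (subst sum.swap) (subst (2) sum.swap, rule refl)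
    also have "\<dots> = (\<Sum>d\<in>C. gcnt G x d * gcnt G y d)"
    proof (rule sum.cong[OF refl])
      fix d assume d: "d \<in> C"
      have "(\<Sum>c\<in>C. \<Sum>c'\<in>C. H ((c, c'), d)) =
          (\<Sum>c\<in>C. (if x = c \<otimes>\<^bsub>G\<^esub> d \<or> x = d \<otimes>\<^bsub>G\<^esub> c then 1 else 0 :: real)) *
          (\<Sum>c'\<in>C. (if y = c' \<otimes>\<^bsub>G\<^esub> d \<or> y = d \<otimes>\<^bsub>G\<^esub> c' then 1 else 0 :: real))"
        unfolding H_def by (simp add: sum_product)
      then show "(\<Sum>c\<in>C. \<Sum>c'\<in>C. H ((c, c'), d)) = gcnt G x d * gcnt G y d"
        using si'[OF d xC(1)] si'[OF d xC(2)] by simp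
    qed
    finally show ?thesis using sg by (simp add: card_cartesian_product n_def)
  qed
  show ?thesis unfolding main C_def[symmetric] n_def[symmetric] using npos
    by (simp add: field_simps power2_eq_square)
qed

end
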